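(* Let $n \geq 9$ and $P \in \mathrm{PLS}(2,3;n)$. Then $P$ has a proper reduction (i.e. $P$ is reducible) if and only if $P$ is not completely reduced.
   Context: $\mathrm{PLS}(2,3;n)$ denotes the set of $n\times n$ partial Latin squares on symbols $\{1,\dots,n\}$ (each cell empty or containing one symbol, no symbol repeated in a row or column) in which rows $1,2$ and columns $1,2,3$ are completely filled and all other cells are empty. Write $R_i$ for row $i$ and $C_j$ for column $j$ of $P$. Compositions: for columns $C_j, C_k$ and $l\le 2$, $C_j \circ_l C_k$ is the column identical to $C_j$ except that its entry in row $l$ is $P(l,k)$. For rows $R_j,R_i$ and $l \le 3$, $R_j \circ_l R_i$ is the row identical to $R_j$ except that its entry in column $l$ is $P(i,l)$. An array line is called Latin if it contains no repeated symbol. Replacement: let $\alpha$ be a symbol not occurring in the $2\times 3$ subarray in the upper left corner of $P$, and let $j,k,l,q,r$ be such that $P(j,1)=P(k,2)=P(l,3)=P(1,q)=P(2,r)=\alpha$. A row $R_i$ with $i \in \{3,\dots,n\}$ replaces $\alpha$ if $R_j\circ_1 R_i$, $R_k \circ_2 R_i$ and $R_l \circ_3 R_i$ are all Latin. A column $C_p$ with $p\in\{4,\dots,n\}$ replaces $\alpha$ if $C_q \circ_1 C_p$ and $C_r \circ_2 C_p$ are both Latin; $C_p$ replaces itself if moreover $p \in \{q,r\}$. $P$ is reducible (has a proper reduction) if there exist such a symbol $\alpha$, a row replacing $\alpha$, and a column replacing $\alpha$ and itself. Cycle types: the $(1,2)$-row-permutation of $P$ is the permutation $\sigma$ of $\{1,\dots,n\}$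 with $\sigma(P(1,i))=P(2,i)$ for all $i$. For a cycle $(a_1\,a_2\,\dots\,a_m)$ in the disjoint cycle representation of $\sigma$, its cycle type is the $0/1$ sequence of length $m$ whose $i$th entry is $1$ if $a_i \in \{P(1,1),P(1,2),P(1,3)\}$ and $0$ otherwise. Two sequences are equivalent if one is obtained from the other by a cyclic permutation. $P$ is completely reduced if the cycle type of every cycle of $\sigma$ is equivalent to one of: $00$, $01$, $11$, $101$, $111$, $1010$, $1110$, $10101$, $101010$. *)

theory Defs
  imports Main
begin

text \<open>An n x n partial array: P i j is the content of cell (i,j), indices 1..n;
  None = empty cell. Symbols are 1..n.\<close>
type_synonym parr = "nat \<Rightarrow> nat \<Rightarrow> nat option"

definition latin_line :: "nat \<Rightarrow> (nat \<Rightarrow> nat option) \<Rightarrow> bool" where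
  "latin_line n f \<longleftrightarrow>
     (\<forall>a\<in>{1..n}. \<forall>b\<in>{1..n}. a \<noteq> b \<longrightarrow> f a \<noteq> None \<longrightarrow> f a \<noteq> f b)"

definition row :: "parr \<Rightarrow> nat \<Rightarrow> (nat \<Rightarrow> nat option)" where
  "row P i = (\<lambda>j. P i j)"

definition col :: "parr \<Rightarrow> nat \<Rightarrow> (nat \<Rightarrow> nat option)" where
  "col P j = (\<lambda>i. P i j)"

definition PLS23 :: "nat \<Rightarrow> parr set" where
  "PLS23 n = {P.
     (\<forall>i j. P i j \<noteq> None \<longrightarrow> i \<in> {1..n} \<and> j \<in> {1..n}) \<and>
     (\<forall>i\<in>{1..n}. \<forall>j\<in>{1..n}. (P i j \<noteq> None \<longleftrightarrow> (i \<le> 2 \<or> j \<le> 3))) \<and>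
     (\<forall>i j s. P i j = Some s \<longrightarrow> s \<in> {1..n}) \<and>
     (\<forall>i\<in>{1..n}. latin_line n (row P i)) \<and>
     (\<forall>j\<in>{1..n}. latin_line n (col P j))}"

text \<open>C_j o_l C_k : column j with its entry in row l replaced by P(l,k).\<close>
definition col_comp :: "parr \<Rightarrow> nat \<Rightarrow> nat \<Rightarrow> nat \<Rightarrow> (nat \<Rightarrow> nat option)" where
  "col_comp P j l k = (col P j)(l := P l k)"

text \<open>R_j o_l R_i : row j with its entry in column l replaced by P(i,l).\<close>
definition row_comp :: "parr \<Rightarrow> nat \<Rightarrow> nat \<Rightarrow> nat \<Rightarrow> (nat \<Rightarrow> nat option)" where
  "row_comp P j l i = (row P j)(l := P i l)"

definition not_in_corner :: "parr \<Rightarrow> nat \<Rightarrow> bool" where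
  "not_in_corner P \<alpha> \<longleftrightarrow> (\<forall>i\<in>{1,2}. \<forall>j\<in>{1,2,3}. P i j \<noteq> Some \<alpha>)"

definition row_replaces :: "nat \<Rightarrow> parr \<Rightarrow> nat \<Rightarrow> nat \<Rightarrow> bool" where
  "row_replaces n P \<alpha> i \<longleftrightarrow> i \<in> {3..n} \<and>
     (\<exists>j\<in>{1..n}. \<exists>k\<in>{1..n}. \<exists>l\<in>{1..n}.
        P j 1 = Some \<alpha> \<and> P k 2 = Some \<alpha> \<and> P l 3 = Some \<alpha> \<and>
        latin_line n (row_comp P j 1 i) \<and> latin_line n (row_comp P k 2 i) \<and>
        latin_line n (row_comp P l 3 i))"

definition col_replaces :: "nat \<Rightarrow> parr \<Rightarrow> nat \<Rightarrow> nat \<Rightarrow> bool" where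
  "col_replaces n P \<alpha> p \<longleftrightarrow> p \<in> {4..n} \<and>
     (\<exists>q\<in>{1..n}. \<exists>r\<in>{1..n}. P 1 q = Some \<alpha> \<and> P 2 r = Some \<alpha> \<and>
        latin_line n (col_comp P q 1 p) \<and> latin_line n (col_comp P r 2 p))"

definition col_replaces_itself :: "nat \<Rightarrow> parr \<Rightarrow> nat \<Rightarrow> nat \<Rightarrow> bool" where
  "col_replaces_itself n P \<alpha> p \<longleftrightarrow> p \<in> {4..n} \<and>
     (\<exists>q\<in>{1..n}. \<exists>r\<in>{1..n}. P 1 q = Some \<alpha> \<and> P 2 r = Some \<alpha> \<and>
        latin_line n (col_comp P q 1 p) \<and> latin_line n (col_comp P r 2 p) \<and>
        p \<in> {q, r})"

definition reducible :: "nat \<Rightarrow> parr \<Rightarrow> bool" where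
  "reducible n P \<longleftrightarrow> (\<exists>\<alpha>\<in>{1..n}. not_in_corner P \<alpha> \<and>
      (\<exists>i. row_replaces n P \<alpha> i) \<and> (\<exists>p. col_replaces_itself n P \<alpha> p))"

text \<open>(1,2)-row-permutation: sigma(P(1,i)) = P(2,i).\<close>
definition rowperm :: "nat \<Rightarrow> parr \<Rightarrow> nat \<Rightarrow> nat" where
  "rowperm n P x = the (P 2 (THE i. i \<in> {1..n} \<and> P 1 i = Some x))"

definition cycle_of :: "nat \<Rightarrow> parr \<Rightarrow> nat \<Rightarrow> nat list" where
  "cycle_of n P a =
     (let m = (LEAST m. 0 < m \<and> (rowperm n P ^^ m) a = a)
      in map (\<lambda>k. (rowperm n P ^^ k) a) [0..<m])"

definition cycle_type :: "nat \<Rightarrow> parr \<Rightarrow> nat \<Rightarrow> nat list" where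
  "cycle_type n P a =
     map (\<lambda>x. if x \<in> {the (P 1 1), the (P 1 2), the (P 1 3)} then 1 else 0) (cycle_of n P a)"

definition allowed_types :: "nat list set" where
  "allowed_types = {[0,0], [0,1], [1,1], [1,0,1], [1,1,1], [1,0,1,0], [1,1,1,0],
                    [1,0,1,0,1], [1,0,1,0,1,0]}"

definition cyc_equiv :: "nat list \<Rightarrow> nat list \<Rightarrow> bool" where
  "cyc_equiv s t \<longleftrightarrow> (\<exists>k. rotate k s = t)"

text \<open>Every cycle of sigma (each cycle is the cycle through any of its elements a in 1..n).\<close>
definition completely_reduced :: "nat \<Rightarrow> parr \<Rightarrow> bool" where
  "completely_reduced n P \<longleftrightarrow>
     (\<forall>a\<in>{1..n}. \<exists>t\<in>allowed_types. cyc_equiv (cycle_type n P a) t)"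

end

theory Submission
  imports Defs
begin


fun noz :: "nat list \<Rightarrow> bool" where
  "noz (x # y # xs) = (\<not>(x = 0 \<and> y = 0) \<and> noz (y # xs))"
| "noz _ = True"

fun rots :: "nat \<Rightarrow> nat list \<Rightarrow> nat list list" where
  "rots 0 xs = []"
| "rots (Suc n) xs = xs # rots n (rotate1 xs)"

lemma set_rots: "s \<in> set (rots n xs) \<Longrightarrow> \<exists>k. rotate k xs = s"
proof (induction n arbitrary: xs)
  case 0 then show ?case by simp
next
  case (Suc n)
  then show ?case
  proof (cases "s = xs")
    case True then show ?thesis by (metis rotate0 id_apply)
  next
    case False
    with Suc.prems have "s \<in> set (rots n (rotate1 xs))" by simp
    from Suc.IH[OF this] obtain k where "rotate k (rotate1 xs) = s" by blast
    then have "rotate (k+1) xs = s" by (simp add: rotate1_rotate_swap)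
    then show ?thesis by blast
  qed
qed

lemma rots_set: "j < n \<Longrightarrow> rotate j xs \<in> set (rots n xs)"
proof (induction n arbitrary: xs j)
  case 0 then show ?case by simp
next
  case (Suc n)
  show ?case
  proof (cases j)
    case 0 then show ?thesis by simp
  next
    case (Suc i)
    with Suc.prems have "i < n" by simp
    from Suc.IH[OF this] have "rotate i (rotate1 xs) \<in> set (rots n (rotate1 xs))" .
    moreover have "rotate i (rotate1 xs) = rotate j xs"
      using Suc by (simp add: rotate1_rotate_swap)
    ultimately show ?thesis by simp
  qed
qed

lemma noz_nth: "noz u \<longleftrightarrow> (\<forall>k. Suc k < length u \<longrightarrow> u!k = 0 \<longrightarrow> u!Suc k \<noteq> 0)"
proof (induction u rule: noz.induct)
  case (1 x y xs)
  show ?case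
    apply (simp only: noz.simps 1)
    apply (auto simp: nth_Cons split: nat.splits)
    done
next
  case ("2_1") then show ?case by simp
next
  case ("2_2" v) then show ?case by simp
qed

lemma noz_count: "noz u \<Longrightarrow> set u \<subseteq> {0,1} \<Longrightarrow> u \<noteq> [] \<Longrightarrow>
   length (filter (\<lambda>x. x = 0) u) + (if hd u = 1 then 1 else 0) + (if last u = 1 then 1 else 0)
     \<le> length (filter (\<lambda>x. x = 1) u) + 1"
proof (induction u rule: noz.induct)
  case (1 x y xs)
  then show ?case by (auto split: if_splits)
qed auto

lemma enum2: "\<forall>u \<in> set (List.n_lists 2 [0,1::nat]).
   (\<exists>s\<in>set (rots 7 u). s \<in> allowed_types)"
  by (simp add: allowed_types_def numeral_eq_Suc)

lemma enum3: "\<forall>u \<in> set (List.n_lists 3 [0,1::nat]). noz (u @ [hd u]) \<longrightarrow> length (filter (\<lambda>x. x = 1) u) \<le> 3 \<longrightarrow>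
   (\<exists>s\<in>set (rots 7 u). s \<in> allowed_types)"
  by (simp add: allowed_types_def numeral_eq_Suc)

lemma enum6: "\<forall>u \<in> set (List.n_lists 6 [0,1::nat]). noz (u @ [hd u]) \<longrightarrow> length (filter (\<lambda>x. x = 1) u) \<le> 3 \<longrightarrow>
   (\<exists>s\<in>set (rots 6 u). s \<in> allowed_types)"
  by (simp add: allowed_types_def numeral_eq_Suc)

lemma enum3b: "\<forall>u \<in> set (List.n_lists 3 [0,1::nat]). noz (u @ [hd u]) \<longrightarrow> length (filter (\<lambda>x. x = 1) u) \<le> 3 \<longrightarrow>
   (\<exists>s\<in>set (rots 6 u). s \<in> allowed_types)"
  by (simp add: allowed_types_def numeral_eq_Suc)
lemma enum4: "\<forall>u \<in> set (List.n_lists 4 [0,1::nat]). noz (u @ [hd u]) \<longrightarrow> length (filter (\<lambda>x. x = 1) u) \<le> 3 \<longrightarrow>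
   (\<exists>s\<in>set (rots 6 u). s \<in> allowed_types)"
  by (simp add: allowed_types_def numeral_eq_Suc)
lemma enum5: "\<forall>u \<in> set (List.n_lists 5 [0,1::nat]). noz (u @ [hd u]) \<longrightarrow> length (filter (\<lambda>x. x = 1) u) \<le> 3 \<longrightarrow>
   (\<exists>s\<in>set (rots 6 u). s \<in> allowed_types)"
  by (simp add: allowed_types_def numeral_eq_Suc)

lemma enum_allowed: "\<forall>s\<in>allowed_types. \<forall>u\<in>set (rots (length s) s). 3 \<le> length u \<longrightarrow> u!0 = 0 \<longrightarrow> u!1 \<noteq> 0"
  by (simp add: allowed_types_def numeral_eq_Suc)

lemma list_L:
  assumes st: "set t \<subseteq> {0,1::nat}" and l2: "2 \<le> length t"
    and ones: "length (filter (\<lambda>x. x = 1) t) \<le> 3"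
    and cyc: "3 \<le> length t \<Longrightarrow> (\<forall>k<length t. t!k = 0 \<longrightarrow> t!(Suc k mod length t) \<noteq> 0)"
  shows "\<exists>s\<in>allowed_types. cyc_equiv t s"
proof -
  have mem: "t \<in> set (List.n_lists (length t) [0,1])" using st by (simp add: set_n_lists)
  have "(\<exists>s\<in>set (rots 7 t). s \<in> allowed_types) \<or> (\<exists>s\<in>set (rots 6 t). s \<in> allowed_types)"
  proof (cases "length t = 2")
    case True
    then have "t \<in> set (List.n_lists 2 [0,1])" using mem by simp
    from enum2[rule_format, OF this] show ?thesis by blast
  next
    case False
    with l2 have l3: "3 \<le> length t" by simp
    note c = cyc[OF l3]
    let ?w = "t @ [hd t]"
    have tne: "t \<noteq> []" using l3 by auto
    have nw: "noz ?w"
      unfolding noz_nth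
    proof (intro allI impI)
      fix k assume k: "Suc k < length ?w" and z: "?w!k = 0"
      have kl: "k < length t" using k by simp
      have "?w!k = t!k" using kl by (simp add: nth_append)
      moreover have "?w!Suc k = t!(Suc k mod length t)"
      proof (cases "Suc k < length t")
        case True then show ?thesis by (simp add: nth_append)
      next
        case False then have "Suc k = length t" using kl by simp
        then show ?thesis using tne by (simp add: nth_append hd_conv_nth)
      qed
      ultimately show "?w!Suc k \<noteq> 0" using c kl z by simp
    qed
    have nt: "noz t" unfolding noz_nth
    proof (intro allI impI)
      fix k assume k: "Suc k < length t" and z: "t!k = 0"
      have "?w!k = 0" using k z by (simp add: nth_append)
      moreover have "Suc k < length ?w" using k by simp
      ultimately have "?w!Suc k \<noteq> 0" using nw unfolding noz_nth by blast
      then show "t!Suc k \<noteq> 0" using k by (simp add: nth_append)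
    qed
    have cnt: "length (filter (\<lambda>x. x = 0) t) + (if hd t = 1 then 1 else 0) + (if last t = 1 then 1 else 0)
     \<le> length (filter (\<lambda>x. x = 1) t) + 1" using noz_count[OF nt st tne] .
    have hd01: "hd t \<in> {0,1}" using st hd_in_set[OF tne] by blast
    have last01: "last t \<in> {0,1}" using st last_in_set[OF tne] by blast
    have "\<not> (hd t = 0 \<and> last t = 0)"
    proof
      assume h: "hd t = 0 \<and> last t = 0"
      have "t!(length t - 1) = 0" using h tne by (simp add: last_conv_nth)
      moreover have "length t - 1 < length t" using tne by simp
      ultimately have "t!(Suc (length t - 1) mod length t) \<noteq> 0" using c by blast
      moreover have "Suc (length t - 1) mod length t = 0" using tne by simp
      ultimately have "t!0 \<noteq> 0" by simp
      then show False using h tne by (simp add: hd_conv_nth)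
    qed
    then have z: "length (filter (\<lambda>x. x = 0) t) \<le> length (filter (\<lambda>x. x = 1) t)"
      using cnt hd01 last01 by (auto split: if_splits)
    have "filter (\<lambda>x. \<not> x = 0) t = filter (\<lambda>x. x = 1) t"
      using st by (intro filter_cong) auto
    then have "length t = length (filter (\<lambda>x. x = 0) t) + length (filter (\<lambda>x. x = 1) t)"
      using sum_length_filter_compl[of "\<lambda>x. x = 0" t] by simp
    then have "length t \<le> 6" using z ones by simp
    then have "length t = 3 \<or> length t = 4 \<or> length t = 5 \<or> length t = 6" using l3 by auto
    then show ?thesis
    proof (elim disjE)
      assume h: "length t = 3"
      have "t \<in> set (List.n_lists 3 [0,1])" using mem h by simp
      from enum3b[rule_format, OF this nw ones] show ?thesis by blast
    next
      assume h: "length t = 4"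
      have "t \<in> set (List.n_lists 4 [0,1])" using mem h by simp
      from enum4[rule_format, OF this nw ones] show ?thesis by blast
    next
      assume h: "length t = 5"
      have "t \<in> set (List.n_lists 5 [0,1])" using mem h by simp
      from enum5[rule_format, OF this nw ones] show ?thesis by blast
    next
      assume h: "length t = 6"
      have "t \<in> set (List.n_lists 6 [0,1])" using mem h by simp
      from enum6[rule_format, OF this nw ones] show ?thesis by blast
    qed
  qed
  then obtain s where "s \<in> allowed_types" "\<exists>k. rotate k t = s"
    using set_rots by blast
  then show ?thesis unfolding cyc_equiv_def by blast
qed

lemma list_L2:
  assumes l3: "3 \<le> length t" and t0: "t!0 = 0" and t1: "t!1 = 0"
  shows "\<not> (\<exists>s\<in>allowed_types. cyc_equiv t s)"
proof
  assume "\<exists>s\<in>allowed_types. cyc_equiv t s"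
  then obtain s k where s: "s \<in> allowed_types" and r: "rotate k t = s" unfolding cyc_equiv_def by blast
  define m where "m = length t"
  have m0: "0 < m" using l3 m_def by (cases t) auto
  define j where "j = m - k mod m"
  have "(j + k) mod m = 0"
  proof -
    have "k mod m < m" using m0 by simp
    have "(j + k) mod m = (j + k mod m) mod m" by (simp add: mod_add_right_eq)
    also have "j + k mod m = m" unfolding j_def using \<open>k mod m < m\<close> by simp
    finally show ?thesis by simp
  qed
  then have "rotate j s = t" unfolding r[symmetric] rotate_rotate using m_def by simp
  moreover have ls: "length s = m" using r m_def length_rotate by metis
  ultimately have "t = rotate (j mod length s) s" by (metis rotate_conv_mod)
  moreover have "j mod length s < length s" using ls m0 by simp
  ultimately have "t \<in> set (rots (length s) s)" using rots_set by metis
  then show False using enum_allowed s l3 t0 t1 by blast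
qed



lemma latin_nth: "latin_line n f \<Longrightarrow> a \<in> {1..n} \<Longrightarrow> b \<in> {1..n} \<Longrightarrow> a \<noteq> b \<Longrightarrow> f a \<noteq> None \<Longrightarrow> f a \<noteq> f b"
  unfolding latin_line_def by blast

lemma latin3:
  fixes f :: "nat \<Rightarrow> nat option"
  assumes "f 1 = Some u1" "f 2 = Some u2" "f 3 = Some u3" "u1 \<noteq> u2" "u1 \<noteq> u3" "u2 \<noteq> u3"
    "\<forall>x. 4 \<le> x \<longrightarrow> f x = None"
  shows "latin_line n f"
  unfolding latin_line_def
proof (intro ballI impI)
  fix a b assume ab: "a \<in> {1..n}" "b \<in> {1..n}" "a \<noteq> b" "f a \<noteq> None"
  then have "a = 1 \<or> a = 2 \<or> a = 3" using assms(7) by (cases "4 \<le> a") auto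
  moreover have "b = 1 \<or> b = 2 \<or> b = 3 \<or> f b = None" using assms(7) ab by (cases "4 \<le> b") auto
  ultimately show "f a \<noteq> f b" using assms ab by auto
qed

lemma latin2:
  fixes f :: "nat \<Rightarrow> nat option"
  assumes "f 1 = Some u1" "f 2 = Some u2" "u1 \<noteq> u2"
    "\<forall>x. 3 \<le> x \<longrightarrow> f x = None"
  shows "latin_line n f"
  unfolding latin_line_def
proof (intro ballI impI)
  fix a b assume ab: "a \<in> {1..n}" "b \<in> {1..n}" "a \<noteq> b" "f a \<noteq> None"
  then have "a = 1 \<or> a = 2" using assms(4) by (cases "3 \<le> a") auto
  moreover have "b = 1 \<or> b = 2 \<or> f b = None" using assms(4) ab by (cases "3 \<le> b") auto
  ultimately show "f a \<noteq> f b" using assms ab by auto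
qed

lemma line_surj:
  fixes g :: "nat \<Rightarrow> nat option" and n :: nat
  assumes fill: "\<forall>c\<in>{1..n}. g c \<noteq> None" and vals: "\<forall>c\<in>{1..n}. the (g c) \<in> {1..n}"
    and inj: "\<forall>a\<in>{1..n}. \<forall>b\<in>{1..n}. g a = g b \<longrightarrow> a = b"
    and x: "x \<in> {1..n}"
  shows "\<exists>c\<in>{1..n}. g c = Some x"
proof -
  let ?f = "\<lambda>c. the (g c)"
  have "inj_on ?f {1..n}"
  proof (rule inj_onI)
    fix a b assume "a \<in> {1..n}" "b \<in> {1..n}" "the (g a) = the (g b)"
    then show "a = b" using fill inj by (metis option.expand)
  qed
  moreover have "?f ` {1..n} \<subseteq> {1..n}" using vals by auto
  ultimately have "?f ` {1..n} = {1..n}" by (intro endo_inj_surj) auto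
  with x obtain c where "c \<in> {1..n}" "x = the (g c)" by blast
  then show ?thesis using fill by force
qed



context
  fixes n :: nat and P :: parr
  assumes n9: "n \<ge> 9" and PP: "P \<in> PLS23 n"
begin

lemma dom: "P i j \<noteq> None \<Longrightarrow> i \<in> {1..n} \<and> j \<in> {1..n}"
  using PP unfolding PLS23_def by blast
lemma filled: "i \<in> {1..n} \<Longrightarrow> j \<in> {1..n} \<Longrightarrow> (P i j \<noteq> None \<longleftrightarrow> (i \<le> 2 \<or> j \<le> 3))"
  using PP unfolding PLS23_def by blast
lemma vals: "P i j = Some s \<Longrightarrow> s \<in> {1..n}"
  using PP unfolding PLS23_def by blast
lemma rowL: "i \<in> {1..n} \<Longrightarrow> latin_line n (row P i)"
  using PP unfolding PLS23_def by blast
lemma colL: "j \<in> {1..n} \<Longrightarrow> latin_line n (col P j)"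
  using PP unfolding PLS23_def by blast

lemma row_inj: "i \<in> {1..n} \<Longrightarrow> a \<in> {1..n} \<Longrightarrow> b \<in> {1..n} \<Longrightarrow> P i a = P i b \<Longrightarrow> P i a \<noteq> None \<Longrightarrow> a = b"
  using latin_nth[OF rowL] unfolding row_def by metis
lemma col_inj: "j \<in> {1..n} \<Longrightarrow> a \<in> {1..n} \<Longrightarrow> b \<in> {1..n} \<Longrightarrow> P a j = P b j \<Longrightarrow> P a j \<noteq> None \<Longrightarrow> a = b"
  using latin_nth[OF colL] unfolding col_def by metis

lemma N1: "1 \<in> {1..n}" and N2: "2 \<in> {1..n}" and N3: "3 \<in> {1..n}" using n9 by auto

lemma row_surj: "i \<in> {1,2} \<Longrightarrow> x \<in> {1..n} \<Longrightarrow> \<exists>c\<in>{1..n}. P i c = Some x"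
proof (rule line_surj[where g = "P i"])
  assume i: "i \<in> {1,2}"
  then have iN: "i \<in> {1..n}" using n9 by auto
  show "\<forall>c\<in>{1..n}. P i c \<noteq> None" using filled iN i by auto
  then show "\<forall>c\<in>{1..n}. the (P i c) \<in> {1..n}" using vals by force
  show "\<forall>a\<in>{1..n}. \<forall>b\<in>{1..n}. P i a = P i b \<longrightarrow> a = b"
    using row_inj iN \<open>\<forall>c\<in>{1..n}. P i c \<noteq> None\<close> by blast
qed

lemma col_surj: "j \<in> {1,2,3} \<Longrightarrow> x \<in> {1..n} \<Longrightarrow> \<exists>c\<in>{1..n}. P c j = Some x"
proof (rule line_surj[where g = "\<lambda>c. P c j"])
  assume j: "j \<in> {1,2,3}"
  then have jN: "j \<in> {1..n}" using n9 by auto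
  show "\<forall>c\<in>{1..n}. P c j \<noteq> None" using filled jN j by auto
  then show "\<forall>c\<in>{1..n}. the (P c j) \<in> {1..n}" using vals by force
  show "\<forall>a\<in>{1..n}. \<forall>b\<in>{1..n}. P a j = P b j \<longrightarrow> a = b"
    using col_inj jN \<open>\<forall>c\<in>{1..n}. P c j \<noteq> None\<close> by blast
qed

abbreviation "\<sigma> \<equiv> rowperm n P"

lemma sig_at: "c \<in> {1..n} \<Longrightarrow> P 1 c = Some x \<Longrightarrow> P 2 c = Some (\<sigma> x)"
proof -
  assume c: "c \<in> {1..n}" and p: "P 1 c = Some x"
  have "(THE i. i \<in> {1..n} \<and> P 1 i = Some x) = c"
    using c p row_inj[OF N1] by (intro the_equality) auto
  moreover have "P 2 c \<noteq> None" using filled[OF N2 c] by simp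
  ultimately show ?thesis unfolding rowperm_def by auto
qed

lemma P1_some: "c \<in> {1..n} \<Longrightarrow> P 1 c = Some (the (P 1 c))"
  using filled[OF N1] by auto

lemma sig_N: "x \<in> {1..n} \<Longrightarrow> \<sigma> x \<in> {1..n}"
proof -
  assume x: "x \<in> {1..n}"
  obtain c where c: "c \<in> {1..n}" "P 1 c = Some x" using row_surj[of 1 x] x by auto
  show ?thesis using sig_at[OF c] vals by blast
qed

lemma sig_ne: "x \<in> {1..n} \<Longrightarrow> \<sigma> x \<noteq> x"
proof
  assume x: "x \<in> {1..n}" and e: "\<sigma> x = x"
  obtain c where c: "c \<in> {1..n}" "P 1 c = Some x" using row_surj[of 1 x] x by auto
  have "P 2 c = Some x" using sig_at[OF c] e by simp
  then show False using col_inj[OF c(1) N1 N2] c by simp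
qed

lemma sig_inj: "x \<in> {1..n} \<Longrightarrow> y \<in> {1..n} \<Longrightarrow> \<sigma> x = \<sigma> y \<Longrightarrow> x = y"
proof -
  assume x: "x \<in> {1..n}" and y: "y \<in> {1..n}" and e: "\<sigma> x = \<sigma> y"
  obtain c where c: "c \<in> {1..n}" "P 1 c = Some x" using row_surj[of 1 x] x by auto
  obtain d where d: "d \<in> {1..n}" "P 1 d = Some y" using row_surj[of 1 y] y by auto
  have "P 2 c = P 2 d" using sig_at[OF c] sig_at[OF d] e by simp
  then have "c = d" using row_inj[OF N2 c(1) d(1)] sig_at[OF c] by blast
  then show ?thesis using c d by simp
qed

lemma pow_N: "x \<in> {1..n} \<Longrightarrow> (\<sigma> ^^ k) x \<in> {1..n}"
proof (induction k)
  case 0 then show ?case by simp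
next
  case (Suc k) then show ?case using sig_N by simp
qed

lemma pow_cancel: "x \<in> {1..n} \<Longrightarrow> y \<in> {1..n} \<Longrightarrow> (\<sigma> ^^ k) x = (\<sigma> ^^ k) y \<Longrightarrow> x = y"
proof (induction k)
  case 0 then show ?case by simp
next
  case (Suc k)
  have "\<sigma> ((\<sigma> ^^ k) x) = \<sigma> ((\<sigma> ^^ k) y)" using Suc.prems(3) by simp
  then have "(\<sigma> ^^ k) x = (\<sigma> ^^ k) y" using sig_inj[OF pow_N[OF Suc.prems(1)] pow_N[OF Suc.prems(2)]] by blast
  then show ?case using Suc.IH Suc.prems(1,2) by blast
qed

lemma period: "x \<in> {1..n} \<Longrightarrow> \<exists>m>0. (\<sigma> ^^ m) x = x"
proof -
  assume x: "x \<in> {1..n}"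
  let ?f = "\<lambda>k. (\<sigma> ^^ k) x"
  have "\<not> inj_on ?f {0..n}"
  proof
    assume "inj_on ?f {0..n}"
    moreover have "?f ` {0..n} \<subseteq> {1..n}" using pow_N x by auto
    ultimately have "card {0..n} \<le> card {1..n}" by (intro card_inj_on_le) auto
    then show False by simp
  qed
  then obtain i j where ij: "i \<in> {0..n}" "j \<in> {0..n}" "i \<noteq> j" "?f i = ?f j"
    unfolding inj_on_def by blast
  have "\<exists>i j. i < j \<and> ?f i = ?f j"
    using ij by (metis linorder_neqE_nat)
  then obtain i j where ij: "i < j" "?f i = ?f j" by blast
  have "(\<sigma> ^^ i) ((\<sigma> ^^ (j - i)) x) = (\<sigma> ^^ i) x"
  proof -
    have "(\<sigma> ^^ i) ((\<sigma> ^^ (j - i)) x) = (\<sigma> ^^ (i + (j - i))) x" by (simp add: funpow_add)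
    also have "i + (j - i) = j" using ij by simp
    finally show ?thesis using ij by simp
  qed
  then have "(\<sigma> ^^ (j - i)) x = x" using pow_cancel pow_N x by blast
  then show ?thesis using ij by (intro exI[of _ "j - i"]) auto
qed

lemma pow_diff: "x \<in> {1..n} \<Longrightarrow> i < j \<Longrightarrow> (\<sigma> ^^ i) x = (\<sigma> ^^ j) x \<Longrightarrow> (\<sigma> ^^ (j - i)) x = x"
proof -
  assume x: "x \<in> {1..n}" and ij: "i < j" "(\<sigma> ^^ i) x = (\<sigma> ^^ j) x"
  have "(\<sigma> ^^ i) ((\<sigma> ^^ (j - i)) x) = (\<sigma> ^^ i) x"
  proof -
    have "(\<sigma> ^^ i) ((\<sigma> ^^ (j - i)) x) = (\<sigma> ^^ (i + (j - i))) x" by (simp add: funpow_add)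
    also have "i + (j - i) = j" using ij by simp
    finally show ?thesis using ij by simp
  qed
  then show "(\<sigma> ^^ (j - i)) x = x" using pow_cancel pow_N x by blast
qed

abbreviation "per a \<equiv> (LEAST m. 0 < m \<and> (\<sigma> ^^ m) a = a)"
abbreviation "Acor \<equiv> {the (P 1 1), the (P 1 2), the (P 1 3)}"

lemma per_props: "a \<in> {1..n} \<Longrightarrow> 0 < per a \<and> (\<sigma> ^^ per a) a = a"
  using LeastI_ex[OF period] by blast

lemma per_min: "a \<in> {1..n} \<Longrightarrow> 0 < k \<Longrightarrow> k < per a \<Longrightarrow> (\<sigma> ^^ k) a \<noteq> a"
  using not_less_Least by blast

lemma ct_eq: "cycle_type n P a = map (\<lambda>k. if (\<sigma> ^^ k) a \<in> Acor then 1 else 0) [0..<per a]"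
  by (simp add: cycle_type_def cycle_of_def Let_def)

lemma none_big: "3 \<le> i \<Longrightarrow> 4 \<le> j \<Longrightarrow> P i j = None"
proof (rule ccontr)
  assume a: "3 \<le> i" "4 \<le> j" "P i j \<noteq> None"
  then have "i \<in> {1..n}" "j \<in> {1..n}" using dom by blast+
  then have "i \<le> 2 \<or> j \<le> 3" using filled[of i j] a(3) by blast
  then show False using a by simp
qed

lemma sig_surj: "y \<in> {1..n} \<Longrightarrow> \<exists>x\<in>{1..n}. \<sigma> x = y"
proof -
  assume y: "y \<in> {1..n}"
  obtain c where c: "c \<in> {1..n}" "P 2 c = Some y" using row_surj[of 2 y] y by auto
  have "P 1 c = Some (the (P 1 c))" using P1_some c by blast
  moreover then have "the (P 1 c) \<in> {1..n}" using vals by blast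
  ultimately show ?thesis using sig_at[OF c(1)] c by force
qed

lemma corner_iff:
  assumes al: "\<alpha> \<in> {1..n}" and be: "\<beta> \<in> {1..n}" and sb: "\<sigma> \<beta> = \<alpha>"
  shows "not_in_corner P \<alpha> \<longleftrightarrow> \<alpha> \<notin> Acor \<and> \<beta> \<notin> Acor"
proof
  assume nc: "not_in_corner P \<alpha>"
  have "\<alpha> \<noteq> the (P 1 c)" if c: "c \<in> {1,2,3}" for c
  proof
    assume "\<alpha> = the (P 1 c)"
    then have "P 1 c = Some \<alpha>" using P1_some c n9 by auto
    then show False using nc c unfolding not_in_corner_def by blast
  qed
  moreover have "\<beta> \<noteq> the (P 1 c)" if c: "c \<in> {1,2,3}" for c
  proof
    assume "\<beta> = the (P 1 c)"
    then have "P 1 c = Some \<beta>" using P1_some c n9 by auto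
    then have "P 2 c = Some \<alpha>" using sig_at c n9 sb by auto
    then show False using nc c unfolding not_in_corner_def by blast
  qed
  ultimately show "\<alpha> \<notin> Acor \<and> \<beta> \<notin> Acor" by auto
next
  assume h: "\<alpha> \<notin> Acor \<and> \<beta> \<notin> Acor"
  show "not_in_corner P \<alpha>" unfolding not_in_corner_def
  proof (intro ballI)
    fix i j assume i: "i \<in> {1,2::nat}" and j: "j \<in> {1,2,3::nat}"
    have jN: "j \<in> {1..n}" using j n9 by auto
    show "P i j \<noteq> Some \<alpha>"
    proof
      assume e: "P i j = Some \<alpha>"
      show False
      proof (cases "i = 1")
        case True
        then have "\<alpha> = the (P 1 j)" using e by simp
        then show False using h j by auto
      next
        case False
        then have i2: "i = 2" using i by simp
        have p1: "P 1 j = Some (the (P 1 j))" using P1_some jN by blast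
        have "P 2 j = Some (\<sigma> (the (P 1 j)))" using sig_at[OF jN p1] .
        then have "\<sigma> (the (P 1 j)) = \<sigma> \<beta>" using e i2 sb by simp
        moreover have "the (P 1 j) \<in> {1..n}" using vals p1 by blast
        ultimately have "the (P 1 j) = \<beta>" using sig_inj be by blast
        then show False using h j by auto
      qed
    qed
  qed
qed

lemma col_one: "c \<in> {1..n} \<Longrightarrow> \<exists>x. \<forall>i\<in>{1..n}. P i c = Some v \<longrightarrow> i = x"
proof (cases "\<exists>i\<in>{1..n}. P i c = Some v")
  case True
  then obtain i0 where "i0 \<in> {1..n}" "P i0 c = Some v" by blast
  moreover assume "c \<in> {1..n}"
  ultimately have "\<forall>i\<in>{1..n}. P i c = Some v \<longrightarrow> i = i0"
  proof (intro ballI impI)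
    fix i assume iN: "i \<in> {1..n}" and e: "P i c = Some v"
    assume i0: "i0 \<in> {1..n}" "P i0 c = Some v" "c \<in> {1..n}"
    show "i = i0" using col_inj[OF i0(3) iN i0(1)] e i0(2) by simp
  qed
  then show ?thesis by blast
next
  case False then show ?thesis by blast
qed

lemma some_of: "i \<in> {1..n} \<Longrightarrow> j \<in> {1..n} \<Longrightarrow> i \<le> 2 \<or> j \<le> 3 \<Longrightarrow> \<exists>v. P i j = Some v"
  using filled by blast

lemma big4: "i \<in> {1..n} \<Longrightarrow> j \<in> {1..n} \<Longrightarrow> P i j = Some \<alpha> \<Longrightarrow> not_in_corner P \<alpha> \<Longrightarrow> i \<le> 2 \<Longrightarrow> 4 \<le> j"
proof (rule ccontr)
  assume a: "i \<in> {1..n}" "j \<in> {1..n}" "P i j = Some \<alpha>" "not_in_corner P \<alpha>" "i \<le> 2" "\<not> 4 \<le> j"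
  then have "i \<in> {1,2}" "j \<in> {1,2,3}" by auto
  then show False using a unfolding not_in_corner_def by blast
qed

lemma big3: "i \<in> {1..n} \<Longrightarrow> j \<in> {1..n} \<Longrightarrow> P i j = Some \<alpha> \<Longrightarrow> not_in_corner P \<alpha> \<Longrightarrow> j \<le> 3 \<Longrightarrow> 3 \<le> i"
proof (rule ccontr)
  assume a: "i \<in> {1..n}" "j \<in> {1..n}" "P i j = Some \<alpha>" "not_in_corner P \<alpha>" "j \<le> 3" "\<not> 3 \<le> i"
  then have "i \<in> {1,2}" "j \<in> {1,2,3}" by auto
  then show False using a unfolding not_in_corner_def by blast
qed

lemma make_reducible:
  assumes al: "\<alpha> \<in> {1..n}" and nc: "not_in_corner P \<alpha>" and ss: "\<sigma> (\<sigma> \<alpha>) \<noteq> \<alpha>"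
  shows "reducible n P"
proof -
  obtain q where q: "q \<in> {1..n}" "P 1 q = Some \<alpha>" using row_surj[of 1 \<alpha>] al by auto
  obtain r where r: "r \<in> {1..n}" "P 2 r = Some \<alpha>" using row_surj[of 2 \<alpha>] al by auto
  have q4: "4 \<le> q" using big4[OF N1 q(1) q(2) nc] by simp
  have r4: "4 \<le> r" using big4[OF N2 r(1) r(2) nc] by simp
  define \<beta> where "\<beta> = the (P 1 r)"
  have pb: "P 1 r = Some \<beta>" using P1_some r(1) unfolding \<beta>_def by blast
  have sb: "\<sigma> \<beta> = \<alpha>" using sig_at[OF r(1) pb] r(2) by simp
  have bN: "\<beta> \<in> {1..n}" using vals pb by blast
  have p2q: "P 2 q = Some (\<sigma> \<alpha>)" using sig_at[OF q] .
  have bne: "\<beta> \<noteq> \<sigma> \<alpha>"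
  proof
    assume "\<beta> = \<sigma> \<alpha>"
    then have "\<sigma> (\<sigma> \<alpha>) = \<alpha>" using sb by simp
    then show False using ss by simp
  qed
  have cri: "col_replaces_itself n P \<alpha> q"
    unfolding col_replaces_itself_def
  proof (intro conjI bexI)
    show "q \<in> {4..n}" using q4 q(1) by simp
    show "P 1 q = Some \<alpha>" by fact
    show "P 2 r = Some \<alpha>" by fact
    show "q \<in> {q, r}" by simp
    show "q \<in> {1..n}" "r \<in> {1..n}" using q r by auto
    have "col_comp P q 1 q = col P q" unfolding col_comp_def col_def by auto
    then show "latin_line n (col_comp P q 1 q)" using colL q(1) by simp
    show "latin_line n (col_comp P r 2 q)"
    proof (rule latin2)
      show "col_comp P r 2 q 1 = Some \<beta>" unfolding col_comp_def col_def using pb by simp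
      show "col_comp P r 2 q 2 = Some (\<sigma> \<alpha>)" unfolding col_comp_def col_def using p2q by simp
      show "\<beta> \<noteq> \<sigma> \<alpha>" by fact
      show "\<forall>x. 3 \<le> x \<longrightarrow> col_comp P r 2 q x = None"
        unfolding col_comp_def col_def using none_big r4 by auto
    qed
  qed
  obtain j where j: "j \<in> {1..n}" "P j 1 = Some \<alpha>" using col_surj[of 1 \<alpha>] al by auto
  obtain k where k: "k \<in> {1..n}" "P k 2 = Some \<alpha>" using col_surj[of 2 \<alpha>] al by auto
  obtain l where l: "l \<in> {1..n}" "P l 3 = Some \<alpha>" using col_surj[of 3 \<alpha>] al by auto
  have j3: "3 \<le> j" using big3[OF j(1) N1 j(2) nc] by simp
  have k3: "3 \<le> k" using big3[OF k(1) N2 k(2) nc] by simp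
  have l3: "3 \<le> l" using big3[OF l(1) N3 l(2) nc] by simp
  obtain vj2 where vj2: "P j 2 = Some vj2" using some_of[OF j(1) N2] by auto
  obtain vj3 where vj3: "P j 3 = Some vj3" using some_of[OF j(1) N3] by auto
  obtain vk1 where vk1: "P k 1 = Some vk1" using some_of[OF k(1) N1] by auto
  obtain vk3 where vk3: "P k 3 = Some vk3" using some_of[OF k(1) N3] by auto
  obtain vl1 where vl1: "P l 1 = Some vl1" using some_of[OF l(1) N1] by auto
  obtain vl2 where vl2: "P l 2 = Some vl2" using some_of[OF l(1) N2] by auto
  obtain x1 where x1: "\<forall>i\<in>{1..n}. P i 1 = Some vj2 \<longrightarrow> i = x1" using col_one[OF N1] by blast
  obtain x2 where x2: "\<forall>i\<in>{1..n}. P i 1 = Some vj3 \<longrightarrow> i = x2" using col_one[OF N1] by blast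
  obtain x3 where x3: "\<forall>i\<in>{1..n}. P i 2 = Some vk1 \<longrightarrow> i = x3" using col_one[OF N2] by blast
  obtain x4 where x4: "\<forall>i\<in>{1..n}. P i 2 = Some vk3 \<longrightarrow> i = x4" using col_one[OF N2] by blast
  obtain x5 where x5: "\<forall>i\<in>{1..n}. P i 3 = Some vl1 \<longrightarrow> i = x5" using col_one[OF N3] by blast
  obtain x6 where x6: "\<forall>i\<in>{1..n}. P i 3 = Some vl2 \<longrightarrow> i = x6" using col_one[OF N3] by blast
  have "\<not> {3..n} \<subseteq> set [x1,x2,x3,x4,x5,x6]"
  proof
    assume "{3..n} \<subseteq> set [x1,x2,x3,x4,x5,x6]"
    then have "card {3..n} \<le> card (set [x1,x2,x3,x4,x5,x6])" by (intro card_mono) auto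
    also have "\<dots> \<le> 6" using card_length[of "[x1,x2,x3,x4,x5,x6]"] by simp
    finally show False using n9 by simp
  qed
  then obtain i where i: "i \<in> {3..n}" "i \<notin> set [x1,x2,x3,x4,x5,x6]" by blast
  have iN: "i \<in> {1..n}" using i by auto
  obtain w1 where w1: "P i 1 = Some w1" using some_of[OF iN N1] by auto
  obtain w2 where w2: "P i 2 = Some w2" using some_of[OF iN N2] by auto
  obtain w3 where w3: "P i 3 = Some w3" using some_of[OF iN N3] by auto
  have "w1 \<noteq> vj2" using x1 iN w1 i(2) by auto
  have "w1 \<noteq> vj3" using x2 iN w1 i(2) by auto
  have "w2 \<noteq> vk1" using x3 iN w2 i(2) by auto
  have "w2 \<noteq> vk3" using x4 iN w2 i(2) by auto
  have "w3 \<noteq> vl1" using x5 iN w3 i(2) by auto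
  have "w3 \<noteq> vl2" using x6 iN w3 i(2) by auto
  have "vj2 \<noteq> vj3" using row_inj[OF j(1) N2 N3] vj2 vj3 by auto
  have "vk1 \<noteq> vk3" using row_inj[OF k(1) N1 N3] vk1 vk3 by auto
  have "vl1 \<noteq> vl2" using row_inj[OF l(1) N1 N2] vl1 vl2 by auto
  have rr: "row_replaces n P \<alpha> i"
    unfolding row_replaces_def
  proof (intro conjI bexI)
    show "i \<in> {3..n}" by fact
    show "P j 1 = Some \<alpha>" "P k 2 = Some \<alpha>" "P l 3 = Some \<alpha>" by fact+
    show "j \<in> {1..n}" "k \<in> {1..n}" "l \<in> {1..n}" by fact+
    show "latin_line n (row_comp P j 1 i)"
    proof (rule latin3)
      show "row_comp P j 1 i 1 = Some w1" unfolding row_comp_def row_def using w1 by simp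
      show "row_comp P j 1 i 2 = Some vj2" unfolding row_comp_def row_def using vj2 by simp
      show "row_comp P j 1 i 3 = Some vj3" unfolding row_comp_def row_def using vj3 by simp
      show "\<forall>x. 4 \<le> x \<longrightarrow> row_comp P j 1 i x = None"
        unfolding row_comp_def row_def using none_big j3 by auto
    qed fact+
    show "latin_line n (row_comp P k 2 i)"
    proof (rule latin3)
      show "row_comp P k 2 i 1 = Some vk1" unfolding row_comp_def row_def using vk1 by simp
      show "row_comp P k 2 i 2 = Some w2" unfolding row_comp_def row_def using w2 by simp
      show "row_comp P k 2 i 3 = Some vk3" unfolding row_comp_def row_def using vk3 by simp
      show "\<forall>x. 4 \<le> x \<longrightarrow> row_comp P k 2 i x = None"
        unfolding row_comp_def row_def using none_big k3 by auto
    qed (use \<open>w2 \<noteq> vk1\<close> \<open>w2 \<noteq> vk3\<close> \<open>vk1 \<noteq> vk3\<close> in auto)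
    show "latin_line n (row_comp P l 3 i)"
    proof (rule latin3)
      show "row_comp P l 3 i 1 = Some vl1" unfolding row_comp_def row_def using vl1 by simp
      show "row_comp P l 3 i 2 = Some vl2" unfolding row_comp_def row_def using vl2 by simp
      show "row_comp P l 3 i 3 = Some w3" unfolding row_comp_def row_def using w3 by simp
      show "\<forall>x. 4 \<le> x \<longrightarrow> row_comp P l 3 i x = None"
        unfolding row_comp_def row_def using none_big l3 by auto
    qed (use \<open>w3 \<noteq> vl1\<close> \<open>w3 \<noteq> vl2\<close> \<open>vl1 \<noteq> vl2\<close> in auto)
  qed
  show ?thesis unfolding reducible_def using al nc rr cri by blast
qed

lemma from_reducible:
  assumes "reducible n P"
  shows "\<exists>\<alpha>\<in>{1..n}. not_in_corner P \<alpha> \<and> \<sigma> (\<sigma> \<alpha>) \<noteq> \<alpha>"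
proof -
  obtain \<alpha> p where al: "\<alpha> \<in> {1..n}" and nc: "not_in_corner P \<alpha>" and cri: "col_replaces_itself n P \<alpha> p"
    using assms unfolding reducible_def by blast
  obtain q r where q: "q \<in> {1..n}" "P 1 q = Some \<alpha>" and r: "r \<in> {1..n}" "P 2 r = Some \<alpha>"
    and L1: "latin_line n (col_comp P q 1 p)" and L2: "latin_line n (col_comp P r 2 p)" and pqr: "p \<in> {q, r}"
    using cri unfolding col_replaces_itself_def by blast
  define \<beta> where "\<beta> = the (P 1 r)"
  have pb: "P 1 r = Some \<beta>" using P1_some r(1) unfolding \<beta>_def by blast
  have sb: "\<sigma> \<beta> = \<alpha>" using sig_at[OF r(1) pb] r(2) by simp
  have bN: "\<beta> \<in> {1..n}" using vals pb by blast
  have p2q: "P 2 q = Some (\<sigma> \<alpha>)" using sig_at[OF q] .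
  have "P 1 r \<noteq> P 2 q"
  proof (cases "p = q")
    case True
    have "col_comp P r 2 p 1 \<noteq> col_comp P r 2 p 2"
      using latin_nth[OF L2 N1 N2] pb unfolding col_comp_def col_def by simp
    then show ?thesis unfolding col_comp_def col_def using True by simp
  next
    case False
    then have pr: "p = r" using pqr by simp
    have "col_comp P q 1 p 1 \<noteq> col_comp P q 1 p 2"
      using latin_nth[OF L1 N1 N2] pb pr unfolding col_comp_def col_def by simp
    then show ?thesis unfolding col_comp_def col_def using pr by simp
  qed
  then have bne: "\<beta> \<noteq> \<sigma> \<alpha>" using pb p2q by simp
  have "\<sigma> (\<sigma> \<alpha>) \<noteq> \<alpha>"
  proof
    assume "\<sigma> (\<sigma> \<alpha>) = \<alpha>"
    then have "\<sigma> (\<sigma> \<alpha>) = \<sigma> \<beta>" using sb by simp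
    then have "\<sigma> \<alpha> = \<beta>" using sig_inj[OF sig_N[OF al] bN] by blast
    then show False using bne by simp
  qed
  then show ?thesis using al nc by blast
qed

lemma dir1: "reducible n P \<Longrightarrow> \<not> completely_reduced n P"
proof -
  assume "reducible n P"
  from from_reducible[OF this] obtain \<alpha> where al: "\<alpha> \<in> {1..n}" and nc: "not_in_corner P \<alpha>"
    and ss: "\<sigma> (\<sigma> \<alpha>) \<noteq> \<alpha>" by blast
  obtain \<beta> where bN: "\<beta> \<in> {1..n}" and sb: "\<sigma> \<beta> = \<alpha>" using sig_surj[OF al] by blast
  have nA: "\<alpha> \<notin> Acor" "\<beta> \<notin> Acor" using corner_iff[OF al bN sb] nc by auto
  have pp: "0 < per \<beta>" "(\<sigma> ^^ per \<beta>) \<beta> = \<beta>" using per_props[OF bN] by auto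
  have s1: "(\<sigma> ^^ 1) \<beta> \<noteq> \<beta>" using sig_ne[OF bN] by simp
  have s2: "(\<sigma> ^^ 2) \<beta> \<noteq> \<beta>"
  proof
    assume "(\<sigma> ^^ 2) \<beta> = \<beta>"
    then have "\<sigma> \<alpha> = \<beta>" using sb by (simp add: numeral_2_eq_2)
    then show False using ss sb by simp
  qed
  have "per \<beta> \<noteq> 1"
  proof
    assume "per \<beta> = 1" then show False using pp(2) s1 by simp
  qed
  moreover have "per \<beta> \<noteq> 2"
  proof
    assume "per \<beta> = 2" then show False using pp(2) s2 by simp
  qed
  ultimately have m3: "3 \<le> per \<beta>" using pp(1) by linarith
  let ?t = "cycle_type n P \<beta>"
  have lt: "length ?t = per \<beta>" by (simp add: ct_eq)
  have t0: "?t ! 0 = 0" using m3 nA by (simp add: ct_eq)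
  have t1: "?t ! 1 = 0" using m3 nA sb by (simp add: ct_eq)
  have "\<not> (\<exists>s\<in>allowed_types. cyc_equiv ?t s)"
    using list_L2[of ?t] lt m3 t0 t1 by simp
  then show ?thesis unfolding completely_reduced_def using bN by blast
qed

lemma dir2: "\<not> completely_reduced n P \<Longrightarrow> reducible n P"
proof -
  assume "\<not> completely_reduced n P"
  then obtain a where aN: "a \<in> {1..n}" and na: "\<not> (\<exists>s\<in>allowed_types. cyc_equiv (cycle_type n P a) s)"
    unfolding completely_reduced_def by blast
  let ?t = "cycle_type n P a"
  let ?m = "per a"
  have pp: "0 < ?m" "(\<sigma> ^^ ?m) a = a" using per_props[OF aN] by auto
  have lt: "length ?t = ?m" by (simp add: ct_eq)
  have nth: "?t ! k = (if (\<sigma> ^^ k) a \<in> Acor then 1 else 0)" if "k < ?m" for k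
    using that by (simp add: ct_eq)
  have st: "set ?t \<subseteq> {0,1}" by (auto simp: ct_eq)
  have "?m \<noteq> 1"
  proof
    assume "?m = 1"
    then have "(\<sigma> ^^ 1) a = a" using pp(2) by simp
    then show False using sig_ne[OF aN] by simp
  qed
  then have m2: "2 \<le> length ?t" using pp lt by linarith
  have ones: "length (filter (\<lambda>x. x = 1) ?t) \<le> 3"
  proof -
    let ?S = "{k. k < length ?t \<and> ?t ! k = 1}"
    have "length (filter (\<lambda>x. x = 1) ?t) = card ?S" by (rule length_filter_conv_card)
    also have "card ?S \<le> card Acor"
    proof (rule card_inj_on_le[where f = "\<lambda>k. (\<sigma> ^^ k) a"])
      show "inj_on (\<lambda>k. (\<sigma> ^^ k) a) ?S"
      proof (rule inj_onI)
        fix i j assume i: "i \<in> ?S" and j: "j \<in> ?S" and e: "(\<sigma> ^^ i) a = (\<sigma> ^^ j) a"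
        show "i = j"
        proof (rule ccontr)
          assume "i \<noteq> j"
          then consider "i < j" | "j < i" by linarith
          then show False
          proof cases
            case 1
            have "(\<sigma> ^^ (j - i)) a = a" using pow_diff[OF aN 1 e] .
            moreover have "0 < j - i" "j - i < ?m" using 1 j lt by auto
            ultimately show False using per_min[OF aN] by blast
          next
            case 2
            have "(\<sigma> ^^ (i - j)) a = a" using pow_diff[OF aN 2 e[symmetric]] .
            moreover have "0 < i - j" "i - j < ?m" using 2 i lt by auto
            ultimately show False using per_min[OF aN] by blast
          qed
        qed
      qed
      show "(\<lambda>k. (\<sigma> ^^ k) a) ` ?S \<subseteq> Acor"
      proof
        fix y assume "y \<in> (\<lambda>k. (\<sigma> ^^ k) a) ` ?S"
        then obtain k where kS: "k \<in> ?S" and y: "y = (\<sigma> ^^ k) a" by blast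
        from kS have k1: "k < ?m" unfolding lt[symmetric] by blast
        from kS have k2: "?t ! k = 1" by blast
        show "y \<in> Acor"
        proof (rule ccontr)
          assume "y \<notin> Acor"
          then have "?t ! k = 0" using nth[OF k1] y by simp
          then show False using k2 by simp
        qed
      qed
      show "finite Acor" by simp
    qed
    also have "card Acor \<le> 3"
      using card_length[of "[the (P 1 1), the (P 1 2), the (P 1 3)]"] by simp
    finally show ?thesis .
  qed
  have "\<not> (3 \<le> length ?t \<longrightarrow> (\<forall>k<length ?t. ?t!k = 0 \<longrightarrow> ?t!(Suc k mod length ?t) \<noteq> 0))"
    using list_L[OF st m2 ones] na by blast
  then obtain k where m3: "3 \<le> ?m" and k: "k < ?m" and z1: "?t!k = 0" and z2: "?t!(Suc k mod ?m) = 0"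
    using lt by auto
  define x where "x = (\<sigma> ^^ k) a"
  define \<alpha> where "\<alpha> = \<sigma> x"
  have xN: "x \<in> {1..n}" unfolding x_def using pow_N aN by blast
  have alN: "\<alpha> \<in> {1..n}" unfolding \<alpha>_def using sig_N xN by blast
  have "(\<sigma> ^^ (Suc k mod ?m)) a = \<alpha>"
  proof (cases "Suc k < ?m")
    case True then show ?thesis unfolding \<alpha>_def x_def by simp
  next
    case False
    then have "Suc k = ?m" using k by simp
    then have "(\<sigma> ^^ (Suc k)) a = a" "Suc k mod ?m = 0" using pp by simp_all
    then show ?thesis unfolding \<alpha>_def x_def by simp
  qed
  moreover have "Suc k mod ?m < ?m" using pp by simp
  ultimately have "?t!(Suc k mod ?m) = (if \<alpha> \<in> Acor then 1 else 0)" using nth by simp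
  then have "\<alpha> \<notin> Acor" using z2 by (simp split: if_splits)
  moreover have "x \<notin> Acor" using nth[OF k] z1 unfolding x_def by (simp split: if_splits)
  ultimately have nc: "not_in_corner P \<alpha>" using corner_iff[OF alN xN] \<alpha>_def by blast
  have ss: "\<sigma> (\<sigma> \<alpha>) \<noteq> \<alpha>"
  proof
    assume h: "\<sigma> (\<sigma> \<alpha>) = \<alpha>"
    have e1: "(\<sigma> ^^ Suc k) ((\<sigma> ^^ 2) a) = (\<sigma> ^^ (Suc k + 2)) a"
      by (simp only: funpow_add comp_apply)
    have e2: "(\<sigma> ^^ 2) ((\<sigma> ^^ Suc k) a) = (\<sigma> ^^ (2 + Suc k)) a"
      by (simp only: funpow_add comp_apply)
    have "(\<sigma> ^^ Suc k) ((\<sigma> ^^ 2) a) = (\<sigma> ^^ 2) ((\<sigma> ^^ Suc k) a)"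
      unfolding e1 e2 by (simp only: add.commute)
    also have "\<dots> = \<sigma> (\<sigma> \<alpha>)" unfolding \<alpha>_def x_def by (simp add: numeral_2_eq_2)
    also have "\<dots> = (\<sigma> ^^ Suc k) a" using h unfolding \<alpha>_def x_def by simp
    finally have "(\<sigma> ^^ 2) a = a" using pow_cancel[OF pow_N[OF aN] aN] by blast
    moreover have "(0::nat) < 2" "2 < ?m" using m3 by auto
    ultimately show False using per_min[OF aN] by blast
  qed
  show ?thesis using make_reducible[OF alN nc ss] .
qed

end

theorem theorem6:
  fixes n :: nat and P :: parr
  assumes "n \<ge> 9" and "P \<in> PLS23 n"
  shows "reducible n P \<longleftrightarrow> \<not> completely_reduced n P"
  using dir1[OF assms] dir2[OF assms] by blast

end
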